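(* Let $\Gamma$ be a Deza graph with parameters $(n,k,k-1,a)$, $k>1$, $\beta=1$. If $x$ is an $A$-vertex of $\Gamma$, then $N(x)\setminus\{x_b\}=N(x_b)\setminus\{x\}$.
   Context: A Deza graph with parameters $(n,k,b,a)$, $a\le b$, is a $k$-regular graph on $n$ vertices in which any two distinct vertices have $a$ or $b$ common neighbours; $\beta$ is the number of vertices $u\ne v$ with exactly $b$ common neighbours with a given vertex $v$ (independent of $v$). Since $\beta=1$, for each vertex $x$ let $x_b$ denote the unique vertex having $b=k-1$ common neighbours with $x$. $N(x)$ is the set of neighbours of $x$. A vertex $x$ is an $A$-vertex if $x$ is adjacent to $x_b$, and an $NA$-vertex otherwise. *)

theory Defs
  imports Main
begin

definition nbrs :: "'a set \<Rightarrow> ('a \<Rightarrow> 'a \<Rightarrow> bool) \<Rightarrow> 'a \<Rightarrow> 'a set" where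
  "nbrs V E x = {y \<in> V. E x y}"

definition common :: "'a set \<Rightarrow> ('a \<Rightarrow> 'a \<Rightarrow> bool) \<Rightarrow> 'a \<Rightarrow> 'a \<Rightarrow> nat" where
  "common V E x y = card (nbrs V E x \<inter> nbrs V E y)"

definition deza_graph :: "'a set \<Rightarrow> ('a \<Rightarrow> 'a \<Rightarrow> bool) \<Rightarrow> nat \<Rightarrow> nat \<Rightarrow> nat \<Rightarrow> nat \<Rightarrow> bool" where
  "deza_graph V E n k b a \<longleftrightarrow>
     finite V \<and> card V = n \<and>
     (\<forall>x\<in>V. \<forall>y\<in>V. E x y \<longleftrightarrow> E y x) \<and>
     (\<forall>x\<in>V. \<not> E x x) \<and>
     (\<forall>x\<in>V. card (nbrs V E x) = k) \<and>
     a \<le> b \<and>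
     (\<forall>x\<in>V. \<forall>y\<in>V. x \<noteq> y \<longrightarrow> common V E x y = a \<or> common V E x y = b)"

definition deza_beta :: "'a set \<Rightarrow> ('a \<Rightarrow> 'a \<Rightarrow> bool) \<Rightarrow> nat \<Rightarrow> 'a \<Rightarrow> nat" where
  "deza_beta V E b v = card {u \<in> V. u \<noteq> v \<and> common V E u v = b}"

text \<open>x_b: the (unique, when beta = 1) vertex having b common neighbours with x.\<close>
definition partner :: "'a set \<Rightarrow> ('a \<Rightarrow> 'a \<Rightarrow> bool) \<Rightarrow> nat \<Rightarrow> 'a \<Rightarrow> 'a" where
  "partner V E b x = (THE y. y \<in> V \<and> y \<noteq> x \<and> common V E y x = b)"

definition A_vertex :: "'a set \<Rightarrow> ('a \<Rightarrow> 'a \<Rightarrow> bool) \<Rightarrow> nat \<Rightarrow> 'a \<Rightarrow> bool" where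
  "A_vertex V E b x \<longleftrightarrow> E x (partner V E b x)"

end

theory Submission
  imports Defs
begin

theorem lemma2:
  fixes V :: "'a set" and E :: "'a \<Rightarrow> 'a \<Rightarrow> bool" and n k a :: nat and x :: 'a
  assumes "deza_graph V E n k (k - 1) a"
    and "k > 1"
    and "\<forall>v\<in>V. deza_beta V E (k - 1) v = 1"
    and "x \<in> V"
    and "A_vertex V E (k - 1) x"
  shows "nbrs V E x - {partner V E (k - 1) x} = nbrs V E (partner V E (k - 1) x) - {x}"
proof -
  have fin: "finite V" and sym: "\<forall>x\<in>V. \<forall>y\<in>V. E x y \<longleftrightarrow> E y x"
    and irr: "\<forall>x\<in>V. \<not> E x x" and deg: "\<forall>x\<in>V. card (nbrs V E x) = k"
    using assms(1) unfolding deza_graph_def by auto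
  have "card {u \<in> V. u \<noteq> x \<and> common V E u x = k - 1} = 1"
    using assms(3,4) unfolding deza_beta_def by auto
  then obtain y where S: "{u \<in> V. u \<noteq> x \<and> common V E u x = k - 1} = {y}"
    using card_1_singletonE by blast
  have y: "y \<in> V" "y \<noteq> x" "common V E y x = k - 1" using S by auto
  have "partner V E (k - 1) x = y"
    unfolding partner_def
  proof (rule the_equality)
    show "y \<in> V \<and> y \<noteq> x \<and> common V E y x = k - 1" using y by auto
    fix z assume "z \<in> V \<and> z \<noteq> x \<and> common V E z x = k - 1"
    then have "z \<in> {u \<in> V. u \<noteq> x \<and> common V E u x = k - 1}" by auto
    then show "z = y" using S by auto
  qed
  then have p: "partner V E (k - 1) x = y" .
  have Exy: "E x y" using assms(5) p unfolding A_vertex_def by simp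
  define C where "C = nbrs V E x \<inter> nbrs V E y"
  have cC: "card C = k - 1" using y(3) unfolding C_def common_def by (simp add: Int_commute)
  have finN: "\<And>z. finite (nbrs V E z)" using fin unfolding nbrs_def by auto
  have yN: "y \<in> nbrs V E x" using Exy y unfolding nbrs_def by auto
  have xN: "x \<in> nbrs V E y" using Exy y sym assms(4) unfolding nbrs_def by auto
  have yC: "y \<notin> C" using irr y unfolding C_def nbrs_def by auto
  have xC: "x \<notin> C" using irr assms(4) unfolding C_def nbrs_def by auto
  have c1: "card (nbrs V E x - {y}) = k - 1" using deg assms(4) yN finN by simp
  have c2: "card (nbrs V E y - {x}) = k - 1" using deg y(1) xN finN by simp
  have e1: "C = nbrs V E x - {y}"
    by (rule card_subset_eq) (use finN c1 cC yC in \<open>auto simp: C_def\<close>)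
  have e2: "C = nbrs V E y - {x}"
    by (rule card_subset_eq) (use finN c2 cC xC in \<open>auto simp: C_def\<close>)
  show ?thesis using e1 e2 p by simp
qed

end
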